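(* Let $G$ be a finite group, $p$ a prime, and let $P$ be a Sylow $p$-subgroup of $G$. If $P/O_p(G)$ is cyclic, then $G$ does not have a redundant Sylow $p$-subgroup.
   Context: $O_p(G)$ denotes the largest normal $p$-subgroup of $G$. For a finite group $G$ and a prime $p$, $G_p$ denotes the set of $p$-elements of $G$ and $\mathrm{Syl}_p(G)$ the set of Sylow $p$-subgroups of $G$. $G$ is said to have a redundant Sylow $p$-subgroup if $G_p$ is contained in the union of the members of some proper subset of $\mathrm{Syl}_p(G)$. *)

theory Defs
  imports "HOL-Algebra.Algebra" "HOL-Computational_Algebra.Primes"
begin

definition p_subgroup :: "('a, 'b) monoid_scheme \<Rightarrow> nat \<Rightarrow> 'a set \<Rightarrow> bool" where
  "p_subgroup G p H \<longleftrightarrow> subgroup H G \<and> finite H \<and> (\<exists>n. card H = p ^ n)"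

definition Syl :: "('a, 'b) monoid_scheme \<Rightarrow> nat \<Rightarrow> 'a set set" where
  "Syl G p = {P. subgroup P G \<and> card P = p ^ multiplicity p (order G)}"

definition p_elements :: "('a, 'b) monoid_scheme \<Rightarrow> nat \<Rightarrow> 'a set" where
  "p_elements G p = {x \<in> carrier G. \<exists>n. group.ord G x = p ^ n}"

definition O_p :: "('a, 'b) monoid_scheme \<Rightarrow> nat \<Rightarrow> 'a set" where
  "O_p G p = (THE N. N \<lhd> G \<and> p_subgroup G p N \<and>
                 (\<forall>M. M \<lhd> G \<and> p_subgroup G p M \<longrightarrow> M \<subseteq> N))"

definition redundant_sylow :: "('a, 'b) monoid_scheme \<Rightarrow> nat \<Rightarrow> bool" where
  "redundant_sylow G p \<longleftrightarrow> (\<exists>S. S \<subset> Syl G p \<and> p_elements G p \<subseteq> \<Union>S)"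

end

theory Submission
  imports Defs
begin


context group begin

lemma card_set_mult_normal:
  assumes fin: "finite (carrier G)" and N: "N \<lhd> G" and S: "subgroup S G"
  shows "card (N <#> S) * card (N \<inter> S) = card N * card S"
proof -
  interpret second_isomorphism_grp N G S
    using N S unfolding second_isomorphism_grp_def second_isomorphism_grp_axioms_def by auto
  have iso: "(G\<lparr>carrier := S\<rparr>) Mod (N \<inter> S) \<cong> (G\<lparr>carrier := N <#> S\<rparr>) Mod N"
    using normal_intersection_quotient_isom unfolding is_iso_def by blast
  have c: "card (rcosets\<^bsub>G\<lparr>carrier := S\<rparr>\<^esub> (N \<inter> S)) = card (rcosets\<^bsub>G\<lparr>carrier := N <#> S\<rparr>\<^esub> N)"
    using iso_same_card[OF iso] by (simp add: FactGroup_def)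
  have gS: "group (G\<lparr>carrier := S\<rparr>)" using S subgroup_imp_group by blast
  have sNS: "subgroup (N <#> S) G" by (rule normal_set_mult_subgroup)
  have gNS: "group (G\<lparr>carrier := N <#> S\<rparr>)" using sNS subgroup_imp_group by blast
  have sub1: "subgroup (N \<inter> S) (G\<lparr>carrier := S\<rparr>)"
    using normal_subgrp_intersection_normal normal_imp_subgroup by (metis Int_commute)
  have sub2: "subgroup N (G\<lparr>carrier := N <#> S\<rparr>)"
    using normal_restrict_supergroup[OF sNS N H_contained_in_set_mult] normal_imp_subgroup by blast
  have l1: "card (rcosets\<^bsub>G\<lparr>carrier := S\<rparr>\<^esub> (N \<inter> S)) * card (N \<inter> S) = card S"
    using group.lagrange[OF gS sub1] by (simp add: order_def)
  have l2: "card (rcosets\<^bsub>G\<lparr>carrier := N <#> S\<rparr>\<^esub> N) * card N = card (N <#> S)"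
    using group.lagrange[OF gNS sub2] by (simp add: order_def)
  show ?thesis using l1 l2 c by (metis mult.commute mult.left_commute)
qed


lemma order_pos: "finite (carrier G) \<Longrightarrow> order G \<noteq> 0"
  unfolding order_def using one_closed by (metis card_0_eq empty_iff)

lemma pgroup_bound:
  assumes fin: "finite (carrier G)" and p: "Factorial_Ring.prime p" and H: "subgroup H G" and c: "card H = p ^ k"
  shows "k \<le> multiplicity p (order G)"
proof -
  have "card H dvd order G" using lagrange[OF H] by (metis dvd_triv_right)
  hence "p ^ k dvd order G" using c by simp
  moreover have "\<not> is_unit p" using p not_prime_unit by blast
  ultimately show ?thesis using multiplicity_geI order_pos[OF fin] by blast
qed

lemma normal_p_prod:
  assumes fin: "finite (carrier G)" and p: "Factorial_Ring.prime p" and N: "N \<lhd> G" and cN: "card N = p ^ a"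
    and S: "subgroup S G" and cS: "card S = p ^ b"
  shows "subgroup (N <#> S) G \<and> (\<exists>k. card (N <#> S) = p ^ k) \<and> N \<subseteq> N <#> S \<and> S \<subseteq> N <#> S"
proof -
  interpret second_isomorphism_grp N G S
    using N S unfolding second_isomorphism_grp_def second_isomorphism_grp_axioms_def by auto
  have "card (N <#> S) * card (N \<inter> S) = p ^ (a + b)"
    using card_set_mult_normal[OF fin N S] cN cS by (simp add: power_add)
  hence "card (N <#> S) dvd p ^ (a + b)" by (metis dvd_triv_left)
  then obtain k where "card (N <#> S) = p ^ k" using divides_primepow_nat[OF p] by blast
  thus ?thesis using normal_set_mult_subgroup H_contained_in_set_mult S_contained_in_set_mult by blast
qed

lemma normal_p_in_sylow:
  assumes fin: "finite (carrier G)" and p: "Factorial_Ring.prime p" and N: "N \<lhd> G" and pN: "p_subgroup G p N"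
    and R: "R \<in> Syl G p"
  shows "N \<subseteq> R"
proof -
  obtain a where cN: "card N = p ^ a" using pN unfolding p_subgroup_def by blast
  have Rs: "subgroup R G" and cR: "card R = p ^ multiplicity p (order G)" using R unfolding Syl_def by auto
  obtain k where sub: "subgroup (N <#> R) G" and ck: "card (N <#> R) = p ^ k"
    and NI: "N \<subseteq> N <#> R" and RI: "R \<subseteq> N <#> R"
    using normal_p_prod[OF fin p N cN Rs cR] by blast
  have "k \<le> multiplicity p (order G)" using pgroup_bound[OF fin p sub ck] .
  hence le: "card (N <#> R) \<le> card R" using ck cR p
    using prime_gt_1_nat[OF p] by simp
  have finNR: "finite (N <#> R)" using sub fin subgroup.subset finite_subset by blast
  have "R = N <#> R" using card_subset_eq[OF finNR RI] le
    by (meson RI card_mono finNR le_antisym)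
  thus ?thesis using NI by simp
qed

lemma O_p_props:
  assumes fin: "finite (carrier G)" and p: "Factorial_Ring.prime p"
  shows "O_p G p \<lhd> G \<and> p_subgroup G p (O_p G p) \<and>
         (\<forall>M. M \<lhd> G \<and> p_subgroup G p M \<longrightarrow> M \<subseteq> O_p G p)"
proof -
  define C where "C = {M. M \<lhd> G \<and> p_subgroup G p M}"
  have finC: "finite C"
  proof (rule finite_subset)
    show "C \<subseteq> Pow (carrier G)" unfolding C_def
      using normal_imp_subgroup subgroup.subset by blast
  qed (use fin in simp)
  have "card {\<one>} = p ^ 0" by simp
  hence oneC: "{\<one>} \<in> C" unfolding C_def p_subgroup_def
    using one_is_normal normal_imp_subgroup by blast
  hence ne: "card ` C \<noteq> {}" by blast
  obtain N where NC: "N \<in> C" and NM: "card N = Max (card ` C)"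
    using Max_in[OF finite_imageI[OF finC] ne] by auto
  have maxN: "\<And>M. M \<in> C \<Longrightarrow> card M \<le> card N"
    using NM finC by simp
  have big: "M \<subseteq> N" if MC: "M \<in> C" for M
  proof -
    have M: "M \<lhd> G" and pM: "p_subgroup G p M" and N: "N \<lhd> G" and pN: "p_subgroup G p N"
      using MC NC unfolding C_def by auto
    obtain a where cM: "card M = p ^ a" using pM unfolding p_subgroup_def by blast
    obtain b where cN: "card N = p ^ b" using pN unfolding p_subgroup_def by blast
    obtain k where sub: "subgroup (M <#> N) G" and ck: "card (M <#> N) = p ^ k"
      and MI: "M \<subseteq> M <#> N" and NI: "N \<subseteq> M <#> N"
      using normal_p_prod[OF fin p M cM normal_imp_subgroup[OF N] cN] by blast
    have finMN: "finite (M <#> N)" using sub fin subgroup.subset finite_subset by blast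
    have "M <#> N \<in> C" unfolding C_def p_subgroup_def
      using normal_subgroup_set_mult_closed[OF M N] sub finMN ck by blast
    hence "card (M <#> N) \<le> card N" using maxN by blast
    hence "N = M <#> N" by (meson NI card_mono finMN le_antisym card_subset_eq)
    thus ?thesis using MI by simp
  qed
  have PN: "N \<lhd> G \<and> p_subgroup G p N \<and> (\<forall>M. M \<lhd> G \<and> p_subgroup G p M \<longrightarrow> M \<subseteq> N)"
    using NC big unfolding C_def by auto
  have "O_p G p = N" unfolding O_p_def
  proof (rule the_equality)
    show "N \<lhd> G \<and> p_subgroup G p N \<and> (\<forall>M. M \<lhd> G \<and> p_subgroup G p M \<longrightarrow> M \<subseteq> N)" by (rule PN)
  next
    fix N' assume "N' \<lhd> G \<and> p_subgroup G p N' \<and> (\<forall>M. M \<lhd> G \<and> p_subgroup G p M \<longrightarrow> M \<subseteq> N')"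
    thus "N' = N" using PN by blast
  qed
  thus ?thesis using PN by simp
qed

end


context group begin

lemma sylow_conj_into:
  assumes fin: "finite (carrier G)" and p: "Factorial_Ring.prime p"
    and P: "P \<in> Syl G p" and Q: "Q \<in> Syl G p"
  shows "\<exists>g\<in>carrier G. \<forall>q\<in>Q. g \<otimes> q \<otimes> inv g \<in> P"
proof -
  have Ps: "subgroup P G" and cP: "card P = p ^ multiplicity p (order G)"
    and Qs: "subgroup Q G" and cQ: "card Q = p ^ multiplicity p (order G)"
    using P Q unfolding Syl_def by auto
  let ?m = "multiplicity p (order G)"
  let ?H = "G\<lparr>carrier := Q\<rparr>"
  let ?E = "rcosets P"
  define \<phi> where "\<phi> = (\<lambda>q. restrict (\<lambda>Y. Y #> inv q) (rcosets P))"
  have PG: "P \<subseteq> carrier G" using Ps subgroup.subset by blast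
  have QG: "Q \<subseteq> carrier G" using Qs subgroup.subset by blast
  have Ecar: "Y \<subseteq> carrier G" if "Y \<in> ?E" for Y
    using subgroup.rcosets_carrier[OF Ps is_group that] .
  have Eclosed: "Y #> g \<in> ?E" if Y: "Y \<in> ?E" and g: "g \<in> carrier G" for Y g
  proof -
    obtain a where a: "a \<in> carrier G" "Y = P #> a" using Y unfolding RCOSETS_def by blast
    have "Y #> g = P #> (a \<otimes> g)" using a g coset_mult_assoc PG by simp
    thus ?thesis using rcosetsI PG a g by simp
  qed
  have gH: "group ?H" using subgroup_imp_group[OF Qs] .
  have bij: "\<phi> q \<in> Bij ?E" if q: "q \<in> Q" for q
  proof -
    have qc: "q \<in> carrier G" using q QG by (rule subsetD[rotated])
    have "bij_betw (\<lambda>Y. Y #> inv q) ?E ?E"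
    proof (rule bij_betw_byWitness[where f' = "\<lambda>Y. Y #> q"])
      show "\<forall>Y\<in>?E. Y #> inv q #> q = Y" using Ecar qc coset_mult_assoc by simp
      show "\<forall>Y\<in>?E. Y #> q #> inv q = Y" using Ecar qc coset_mult_assoc by simp
      show "(\<lambda>Y. Y #> inv q) ` ?E \<subseteq> ?E" using Eclosed qc by auto
      show "(\<lambda>Y. Y #> q) ` ?E \<subseteq> ?E" using Eclosed qc by auto
    qed
    hence "bij_betw (\<phi> q) ?E ?E" unfolding \<phi>_def by (rule bij_betw_cong[THEN iffD1, rotated]) simp
    thus ?thesis unfolding Bij_def \<phi>_def by simp
  qed
  have act: "group_action ?H ?E \<phi>"
    unfolding group_action_def group_hom_def group_hom_axioms_def
  proof (intro conjI)
    show "group ?H" by (rule gH)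
    show "group (BijGroup ?E)" by (rule group_BijGroup)
    show "\<phi> \<in> hom ?H (BijGroup ?E)"
    proof (rule homI)
      fix q assume "q \<in> carrier ?H"
      thus "\<phi> q \<in> carrier (BijGroup ?E)" using bij by (simp add: BijGroup_def)
    next
      fix x y assume x: "x \<in> carrier ?H" and y: "y \<in> carrier ?H"
      have xc: "x \<in> carrier G" and yc: "y \<in> carrier G" using x y QG by auto
      have "\<phi> (x \<otimes> y) = compose ?E (\<phi> x) (\<phi> y)"
      proof (rule ext)
        fix Y show "\<phi> (x \<otimes> y) Y = compose ?E (\<phi> x) (\<phi> y) Y"
        proof (cases "Y \<in> ?E")
          case True
          have "Y #> inv (x \<otimes> y) = Y #> inv y #> inv x"
            using True Ecar xc yc coset_mult_assoc inv_mult_group by simp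
          thus ?thesis using True Eclosed yc unfolding \<phi>_def compose_def by simp
        qed (simp add: \<phi>_def compose_def)
      qed
      thus "\<phi> (x \<otimes>\<^bsub>?H\<^esub> y) = \<phi> x \<otimes>\<^bsub>BijGroup ?E\<^esub> \<phi> y"
        using bij x y by (simp add: BijGroup_def)
    qed
  qed
  interpret A: group_action ?H ?E \<phi> by (rule act)
  have finE: "finite ?E"
    using finite_subset[OF rcosets_subset_PowG[OF Ps]] fin by simp
  show ?thesis
  proof (rule ccontr)
    assume nf: "\<not> ?thesis"
    have "p dvd card orb" if orb: "orb \<in> orbits ?H ?E \<phi>" for orb
    proof -
      obtain Y where Y: "Y \<in> ?E" and oX: "orb = orbit ?H \<phi> Y"
        using orb unfolding orbits_def by blast
      obtain a where a: "a \<in> carrier G" "Y = P #> a" using Y unfolding RCOSETS_def by blast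
      have "\<not> (\<forall>q\<in>Q. a \<otimes> q \<otimes> inv a \<in> P)" using nf a(1) by auto
      then obtain q where q: "q \<in> Q" and nq: "a \<otimes> q \<otimes> inv a \<notin> P" by auto
      have qc: "q \<in> carrier G" using q QG by (rule subsetD[rotated])
      have iq: "inv q \<in> Q" by (rule subgroup.m_inv_closed[OF Qs q])
      have ne: "\<phi> (inv q) Y \<noteq> Y"
      proof
        assume "\<phi> (inv q) Y = Y"
        hence "P #> (a \<otimes> q) = P #> a" unfolding \<phi>_def using Y a qc coset_mult_assoc PG by simp
        hence "a \<otimes> q \<in> P #> a" using rcos_self[OF _ Ps, of "a \<otimes> q"] a qc by simp
        hence "a \<otimes> q \<otimes> inv a \<in> P" using subgroup.rcos_module_imp[OF Ps is_group a(1)] by blast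
        thus False using nq by blast
      qed
      have sub: "orb \<subseteq> ?E" using oX A.element_image Y unfolding orbit_def by auto
      have finO: "finite orb" using sub finE finite_subset by blast
      have X1: "Y \<in> orb" using oX Y A.orbit_refl by blast
      have X2: "\<phi> (inv q) Y \<in> orb" using oX iq unfolding orbit_def by auto
      have "card orb \<noteq> 1"
      proof
        assume "card orb = 1"
        then obtain z where "orb = {z}" by (rule card_1_singletonE)
        thus False using X1 X2 ne by auto
      qed
      moreover have "card orb * card (stabilizer ?H \<phi> Y) = p ^ ?m"
        using A.orbit_stabilizer_theorem[OF Y] cQ by (simp add: order_def oX)
      hence "card orb dvd p ^ ?m" using dvd_triv_left[of "card orb" "card (stabilizer ?H \<phi> Y)"] by simp
      then obtain i where "card orb = p ^ i" using divides_primepow_nat[OF p] by blast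
      ultimately show ?thesis by (cases i) auto
    qed
    hence "p dvd (\<Sum>orb\<in>orbits ?H ?E \<phi>. \<Sum>x\<in>orb. (1::nat))" by (simp add: dvd_sum)
    hence "p dvd card ?E" using A.disjoint_sum[OF finE, of "\<lambda>_. 1::nat"] by simp
    then obtain c where c: "card ?E = p * c" by blast
    have "card ?E * card P = order G" using lagrange[OF Ps] .
    hence "order G = p ^ Suc ?m * c" using c cP by (simp add: mult_ac)
    hence "p ^ Suc ?m dvd order G" by (metis dvd_triv_left)
    moreover have "\<not> is_unit p" using p not_prime_unit by blast
    ultimately have "Suc ?m \<le> ?m" using multiplicity_geI[OF order_pos[OF fin]] by blast
    thus False by simp
  qed
qed

end


theorem corollary2p3:
  fixes G (structure) and p :: nat and P :: "'a set"
  assumes "group G" and "finite (carrier G)" and "Factorial_Ring.prime p"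
    and "P \<in> Syl G p"
    and "cyclic_group ((G\<lparr>carrier := P\<rparr>) Mod (O_p G p))"
  shows "\<not> redundant_sylow G p"
proof
  interpret group G by (rule assms(1))
  note fin = assms(2) and p = assms(3)
  define N where "N = O_p G p"
  have Nn: "N \<lhd> G" and pN: "p_subgroup G p N"
    using O_p_props[OF fin p] unfolding N_def by auto
  have Ps: "subgroup P G" and cP: "card P = p ^ multiplicity p (order G)"
    using assms(4) unfolding Syl_def by auto
  have NP: "N \<subseteq> P" using normal_p_in_sylow[OF fin p Nn pN assms(4)] .
  have NG': "N \<lhd> G\<lparr>carrier := P\<rparr>" using normal_restrict_supergroup[OF Ps Nn NP] .
  have gP: "group (G\<lparr>carrier := P\<rparr>)" using subgroup_imp_group[OF Ps] .
  have gQ: "group (G\<lparr>carrier := P\<rparr> Mod N)" using normal.factorgroup_is_group[OF NG'] .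
  have Nsub: "subgroup N G" using Nn normal_imp_subgroup by blast
  obtain Xg where Xg: "Xg \<in> carrier (G\<lparr>carrier := P\<rparr> Mod N)"
    and XgR: "carrier (G\<lparr>carrier := P\<rparr> Mod N) = range (\<lambda>n::int. Xg [^]\<^bsub>G\<lparr>carrier := P\<rparr> Mod N\<^esub> n)"
    using assms(5) group.cyclic_group[OF gQ] unfolding N_def by blast
  obtain x where xP: "x \<in> P" and Xx: "Xg = N #> x"
    using Xg by (auto simp: FactGroup_def RCOSETS_def)
  have xc: "x \<in> carrier G" using xP Ps subgroup.subset by blast
  have hom: "(\<lambda>a. N #>\<^bsub>G\<lparr>carrier := P\<rparr>\<^esub> a) \<in> hom (G\<lparr>carrier := P\<rparr>) (G\<lparr>carrier := P\<rparr> Mod N)"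
    using normal.r_coset_hom_Mod[OF NG'] .
  have gen: "\<exists>n\<in>N. \<exists>k::int. a = n \<otimes> x [^] k" if aP: "a \<in> P" for a
  proof -
    have ac: "a \<in> carrier G" using aP Ps subgroup.subset by blast
    have "N #>\<^bsub>G\<lparr>carrier := P\<rparr>\<^esub> a \<in> carrier (G\<lparr>carrier := P\<rparr> Mod N)"
      using hom aP unfolding hom_def by auto
    then obtain k :: int where k: "N #> a = Xg [^]\<^bsub>G\<lparr>carrier := P\<rparr> Mod N\<^esub> k"
      using XgR by auto
    have "N #>\<^bsub>G\<lparr>carrier := P\<rparr>\<^esub> (x [^]\<^bsub>G\<lparr>carrier := P\<rparr>\<^esub> k)
          = (N #>\<^bsub>G\<lparr>carrier := P\<rparr>\<^esub> x) [^]\<^bsub>G\<lparr>carrier := P\<rparr> Mod N\<^esub> k"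
      using hom_int_pow[OF hom _ gP gQ] xP by simp
    hence "N #> a = N #> (x [^] k)"
      using k Xx int_pow_consistent[OF Ps xP] by simp
    moreover have "a \<in> N #> a" using rcos_self[OF ac Nsub] .
    ultimately have "a \<in> N #> (x [^] k)" by simp
    thus ?thesis unfolding r_coset_def by blast
  qed
  assume "redundant_sylow G p"
  then obtain S where SS: "S \<subset> Syl G p" and cov: "p_elements G p \<subseteq> \<Union>S"
    unfolding redundant_sylow_def by blast
  obtain Q where Q: "Q \<in> Syl G p" and QS: "Q \<notin> S" using SS by blast
  have Qs: "subgroup Q G" and cQ: "card Q = p ^ multiplicity p (order G)"
    using Q unfolding Syl_def by auto
  obtain g where gc: "g \<in> carrier G" and gPQ: "\<forall>u\<in>P. g \<otimes> u \<otimes> inv g \<in> Q"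
    using sylow_conj_into[OF fin p Q assms(4)] by blast
  define y where "y = g \<otimes> x \<otimes> inv g"
  have yQ: "y \<in> Q" unfolding y_def using gPQ xP by blast
  have yc: "y \<in> carrier G" unfolding y_def using gc xc by simp
  have gQs: "group (G\<lparr>carrier := Q\<rparr>)" using subgroup_imp_group[OF Qs] .
  have "y [^]\<^bsub>G\<lparr>carrier := Q\<rparr>\<^esub> order (G\<lparr>carrier := Q\<rparr>) = \<one>\<^bsub>G\<lparr>carrier := Q\<rparr>\<^esub>"
    using group.pow_order_eq_1[OF gQs] yQ by simp
  hence "y [^] card Q = \<one>" by (simp add: order_def nat_pow_consistent[symmetric])
  hence "ord y dvd p ^ multiplicity p (order G)" using pow_eq_id[OF yc] cQ by simp
  then obtain i where "ord y = p ^ i" using divides_primepow_nat[OF p] by blast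
  hence "y \<in> p_elements G p" unfolding p_elements_def using yc by blast
  then obtain R where RS: "R \<in> S" and yR: "y \<in> R" using cov by blast
  have R: "R \<in> Syl G p" using RS SS by blast
  have Rs: "subgroup R G" and cR: "card R = p ^ multiplicity p (order G)"
    using R unfolding Syl_def by auto
  have NR: "N \<subseteq> R" using normal_p_in_sylow[OF fin p Nn pN R] .
  define T where "T = {b \<in> carrier G. g \<otimes> b \<otimes> inv g \<in> R}"
  have Ts: "subgroup T G"
  proof (rule subgroupI)
    show "T \<subseteq> carrier G" unfolding T_def by blast
    have "g \<otimes> \<one> \<otimes> inv g = \<one>" using gc by simp
    hence "\<one> \<in> T" unfolding T_def using subgroup.one_closed[OF Rs] by simp
    thus "T \<noteq> {}" by blast
  next
    fix b assume b: "b \<in> T"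
    hence bc: "b \<in> carrier G" and bR: "g \<otimes> b \<otimes> inv g \<in> R" unfolding T_def by auto
    have "g \<otimes> inv b \<otimes> inv g = inv (g \<otimes> b \<otimes> inv g)"
      using gc bc by (simp add: inv_mult_group m_assoc)
    thus "inv b \<in> T" unfolding T_def using bc subgroup.m_inv_closed[OF Rs bR] by simp
  next
    fix b c assume b: "b \<in> T" and c: "c \<in> T"
    hence bc: "b \<in> carrier G" and bR: "g \<otimes> b \<otimes> inv g \<in> R"
      and cc: "c \<in> carrier G" and cR: "g \<otimes> c \<otimes> inv g \<in> R" unfolding T_def by auto
    have "g \<otimes> (b \<otimes> c) \<otimes> inv g = (g \<otimes> b \<otimes> inv g) \<otimes> (g \<otimes> c \<otimes> inv g)"
    proof -
      have h: "inv g \<otimes> (g \<otimes> z) = z" if "z \<in> carrier G" for z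
        using gc that by (simp add: m_assoc[symmetric])
      show ?thesis using gc bc cc by (simp add: m_assoc h)
    qed
    thus "b \<otimes> c \<in> T" unfolding T_def using bc cc subgroup.m_closed[OF Rs bR cR] by simp
  qed
  have xT: "x \<in> T" unfolding T_def using xc yR y_def by simp
  have NT: "N \<subseteq> T"
  proof
    fix n assume n: "n \<in> N"
    have "g \<otimes> n \<otimes> inv g \<in> N" using normal.inv_op_closed2[OF Nn gc n] .
    thus "n \<in> T" unfolding T_def using n NR Nsub subgroup.subset by blast
  qed
  have PT: "P \<subseteq> T"
  proof
    fix a assume "a \<in> P"
    then obtain n k where n: "n \<in> N" and a: "a = n \<otimes> x [^] (k::int)" using gen by blast
    have "x [^] k \<in> T" using subgroup_int_pow_closed[OF Ts xT] .
    thus "a \<in> T" using a n NT subgroup.m_closed[OF Ts] by blast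
  qed
  define C where "C = (\<lambda>u. g \<otimes> u \<otimes> inv g) ` P"
  have inj: "inj_on (\<lambda>u. g \<otimes> u \<otimes> inv g) P"
  proof (rule inj_onI)
    fix u v assume "u \<in> P" "v \<in> P" and e: "g \<otimes> u \<otimes> inv g = g \<otimes> v \<otimes> inv g"
    hence uc: "u \<in> carrier G" and vc: "v \<in> carrier G" using Ps subgroup.subset by blast+
    show "u = v" using e gc uc vc by (simp add: m_assoc)
  qed
  have cC: "card C = p ^ multiplicity p (order G)" unfolding C_def using card_image[OF inj] cP by simp
  have CR: "C \<subseteq> R" unfolding C_def using PT unfolding T_def by blast
  have CQ: "C \<subseteq> Q" unfolding C_def using gPQ by blast
  have finR: "finite R" using Rs fin subgroup.subset finite_subset by blast
  have finQ: "finite Q" using Qs fin subgroup.subset finite_subset by blast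
  have "C = R" using card_subset_eq[OF finR CR] cC cR by simp
  moreover have "C = Q" using card_subset_eq[OF finQ CQ] cC cQ by simp
  ultimately have "R = Q" by simp
  thus False using RS QS by simp
qed

end
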